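(* Let $A$ and $B$ be convex subsets of $\mathbb R^2$ and let $k\ge 0$ be an integer. Assume $A$ contains a circle of radius $r$ and $B$ contains a circle of radius $R$, such that $rR\ge\frac{1}{2^k}(1+\sqrt2)^2$. Then the scaled grid problem over $\mathbb Z[\omega]$ for $A$, $B$ and $k$ has at least $2$ solutions.
   Context: Let $\omega=e^{i\pi/4}$ and $\mathbb Z[\omega]=\{a_0+a_1\omega+a_2\omega^2+a_3\omega^3: a_j\in\mathbb Z\}\subseteq\mathbb C\cong\mathbb R^2$, with automorphism $(a_0+a_1\omega+a_2\omega^2+a_3\omega^3)^\bullet=a_0-a_1\omega+a_2\omega^2-a_3\omega^3$. A solution of the scaled grid problem over $\mathbb Z[\omega]$ for $A$, $B$ and $k$ is a $u\in\mathbb Z[\omega]$ with $u\in\sqrt2^{\,k}A$ and $u^\bullet\in(-\sqrt2)^kB$. "Contains a circle of radius $r$" means contains a closed disk of radius $r$. *)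

theory Defs
  imports "HOL-Analysis.Analysis"
begin

definition omega :: complex where
  "omega = cis (pi / 4)"

definition zomega :: "int \<Rightarrow> int \<Rightarrow> int \<Rightarrow> int \<Rightarrow> complex" where
  "zomega a0 a1 a2 a3 = of_int a0 + of_int a1 * omega + of_int a2 * omega ^ 2 + of_int a3 * omega ^ 3"

definition ZOmega :: "complex set" where
  "ZOmega = {zomega a0 a1 a2 a3 | a0 a1 a2 a3. True}"

text \<open>The automorphism (bullet) on Z[w], defined via the (unique) integer coordinates.\<close>
definition zomega_bullet :: "complex \<Rightarrow> complex" where
  "zomega_bullet u = (THE v. \<exists>a0 a1 a2 a3. u = zomega a0 a1 a2 a3 \<and> v = zomega a0 (- a1) a2 (- a3))"

definition scale_set :: "real \<Rightarrow> complex set \<Rightarrow> complex set" where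
  "scale_set c S = (\<lambda>z. complex_of_real c * z) ` S"

definition scaled_grid_solution :: "complex set \<Rightarrow> complex set \<Rightarrow> nat \<Rightarrow> complex \<Rightarrow> bool" where
  "scaled_grid_solution A B k u \<longleftrightarrow>
     u \<in> ZOmega \<and> u \<in> scale_set (sqrt 2 ^ k) A \<and> zomega_bullet u \<in> scale_set ((- sqrt 2) ^ k) B"

end

theory Submission
  imports Defs
begin


lemma two_sq_nat: "(m::nat)^2 = 2 * n^2 \<Longrightarrow> n = 0"
proof (induction n arbitrary: m rule: less_induct)
  case (less n)
  show ?case
  proof (rule ccontr)
    assume "n \<noteq> 0"
    have "even (m^2)" using less.prems by simp
    then have "even m" by simp
    then obtain m' where m: "m = 2*m'" by blast
    have "n^2 = 2 * m'^2" using less.prems m by (simp add: power2_eq_square)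
    then have "even (n^2)" by simp
    then have "even n" by simp
    then obtain n' where n: "n = 2*n'" by blast
    have "m'^2 = 2*n'^2" using \<open>n^2 = 2 * m'^2\<close> n by (simp add: power2_eq_square)
    have "n' < n" using n \<open>n \<noteq> 0\<close> by simp
    then have "n' = 0" using less.IH \<open>m'^2 = 2*n'^2\<close> by blast
    then show False using n \<open>n \<noteq> 0\<close> by simp
  qed
qed

lemma irr: assumes "real_of_int m = real_of_int n * sqrt 2" shows "n = 0"
proof -
  have "(real_of_int m)^2 = (real_of_int n)^2 * 2" using assms by (simp add: power_mult_distrib)
  then have "m^2 = 2 * n^2" by (metis (mono_tags) mult.commute of_int_eq_iff of_int_mult of_int_numeral of_int_power)
  then have "(nat \<bar>m\<bar>)^2 = 2 * (nat \<bar>n\<bar>)^2"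
    by (metis abs_ge_zero nat_int nat_mult_distrib nat_numeral nat_power_eq power2_abs zero_le_numeral)
  then show ?thesis using two_sq_nat by fastforce
qed

lemma irr2: assumes "real_of_int a + real_of_int b * sqrt 2 = real_of_int c + real_of_int d * sqrt 2"
  shows "a = c \<and> b = d"
proof -
  have "real_of_int (a - c) = real_of_int (d - b) * sqrt 2" using assms by (simp add: algebra_simps)
  then have "d - b = 0" by (rule irr)
  then show ?thesis using assms by simp
qed



definition UU :: "int \<times> int \<Rightarrow> real" where "UU p = of_int (fst p) + of_int (snd p) * sqrt 2"
definition VV :: "int \<times> int \<Rightarrow> real" where "VV p = of_int (fst p) - of_int (snd p) * sqrt 2"
definition sol1 :: "real \<Rightarrow> real \<Rightarrow> real \<Rightarrow> real \<Rightarrow> int \<times> int \<Rightarrow> bool" where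
  "sol1 x0 d y0 D p \<longleftrightarrow> x0 \<le> UU p \<and> UU p \<le> x0 + d \<and> y0 \<le> VV p \<and> VV p \<le> y0 + D"
definition two1 :: "real \<Rightarrow> real \<Rightarrow> real \<Rightarrow> real \<Rightarrow> bool" where
  "two1 x0 d y0 D \<longleftrightarrow> (\<exists>p q. p \<noteq> q \<and> sol1 x0 d y0 D p \<and> sol1 x0 d y0 D q)"

lemma helpH:
  assumes "d \<ge> 1" "x0 - y0 - D + 1 \<le> 2 * (of_int b * sqrt 2)" "2 * (of_int b * sqrt 2) \<le> x0 - y0"
  shows "sol1 x0 d y0 D (\<lceil>x0 - of_int b * sqrt 2\<rceil>, b)"
proof -
  have c: "of_int \<lceil>x0 - of_int b * sqrt 2\<rceil> - 1 < x0 - of_int b * sqrt 2 \<and> x0 - of_int b * sqrt 2 \<le> of_int \<lceil>x0 - of_int b * sqrt 2\<rceil>" by (rule ceiling_correct)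
  show ?thesis unfolding sol1_def UU_def VV_def fst_conv snd_conv of_int_add of_int_1 using assms c by (intro conjI; linarith)
qed

lemma helpH2:
  assumes "d \<ge> 2" "x0 - y0 - D + 2 \<le> 2 * (of_int b * sqrt 2)" "2 * (of_int b * sqrt 2) \<le> x0 - y0"
  shows "sol1 x0 d y0 D (\<lceil>x0 - of_int b * sqrt 2\<rceil> + 1, b)"
proof -
  have c: "of_int \<lceil>x0 - of_int b * sqrt 2\<rceil> - 1 < x0 - of_int b * sqrt 2 \<and> x0 - of_int b * sqrt 2 \<le> of_int \<lceil>x0 - of_int b * sqrt 2\<rceil>" by (rule ceiling_correct)
  show ?thesis unfolding sol1_def UU_def VV_def fst_conv snd_conv of_int_add of_int_1 using assms c by (intro conjI; linarith)
qed

lemma ceil_mult: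
  assumes "h > 0"
  shows "L \<le> h * of_int \<lceil>L / h\<rceil> \<and> h * of_int \<lceil>L / h\<rceil> < L + h"
proof -
  have c: "of_int \<lceil>L/h\<rceil> - 1 < L/h \<and> L/h \<le> of_int \<lceil>L/h\<rceil>" by (rule ceiling_correct)
  have "L \<le> h * of_int \<lceil>L / h\<rceil>" using c assms by (metis mult.commute pos_divide_le_eq)
  moreover have "h * (of_int \<lceil>L / h\<rceil> - 1) < L" using c assms by (simp add: field_simps)
  ultimately show ?thesis by (simp add: algebra_simps)
qed

lemma baseB1:
  assumes "d \<ge> 1" "D \<ge> 1 + 4 * sqrt 2"
  shows "two1 x0 d y0 D"
proof -
  define h where "h = 2 * sqrt 2"
  have hp: "h > 0" unfolding h_def by simp
  define L where "L = x0 - y0 - D + 1"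
  define b where "b = \<lceil>L / h\<rceil>"
  have c: "L \<le> h * of_int b \<and> h * of_int b < L + h" using ceil_mult[OF hp] unfolding b_def by blast
  have e1: "2 * (of_int b * sqrt 2) = h * of_int b" unfolding h_def by simp
  have e2: "2 * (of_int (b+1) * sqrt 2) = h * of_int b + h" unfolding h_def by (simp add: algebra_simps)
  have hD: "4 * sqrt 2 = 2 * h" unfolding h_def by simp
  have "sol1 x0 d y0 D (\<lceil>x0 - of_int b * sqrt 2\<rceil>, b)"
    apply (rule helpH) using assms c e1 hD unfolding L_def by linarith+
  moreover have "sol1 x0 d y0 D (\<lceil>x0 - of_int (b+1) * sqrt 2\<rceil>, b+1)"
    apply (rule helpH) using assms c e2 hD unfolding L_def by linarith+
  moreover have "(\<lceil>x0 - of_int b * sqrt 2\<rceil>, b) \<noteq> (\<lceil>x0 - of_int (b+1) * sqrt 2\<rceil>, b+1)" by simp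
  ultimately show ?thesis unfolding two1_def by blast
qed

lemma baseB2:
  assumes "d \<ge> 2" "D \<ge> 2 + 2 * sqrt 2"
  shows "two1 x0 d y0 D"
proof -
  define h where "h = 2 * sqrt 2"
  have hp: "h > 0" unfolding h_def by simp
  define L where "L = x0 - y0 - D + 2"
  define b where "b = \<lceil>L / h\<rceil>"
  have c: "L \<le> h * of_int b \<and> h * of_int b < L + h" using ceil_mult[OF hp] unfolding b_def by blast
  have e1: "2 * (of_int b * sqrt 2) = h * of_int b" unfolding h_def by simp
  have hD: "2 * sqrt 2 = h" unfolding h_def by simp
  have "sol1 x0 d y0 D (\<lceil>x0 - of_int b * sqrt 2\<rceil>, b)"
    apply (rule helpH) using assms c e1 hD unfolding L_def by linarith+
  moreover have "sol1 x0 d y0 D (\<lceil>x0 - of_int b * sqrt 2\<rceil> + 1, b)"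
    apply (rule helpH2) using assms c e1 hD unfolding L_def by linarith+
  moreover have "(\<lceil>x0 - of_int b * sqrt 2\<rceil>, b) \<noteq> (\<lceil>x0 - of_int b * sqrt 2\<rceil> + 1, b)" by simp
  ultimately show ?thesis unfolding two1_def by blast
qed

definition lam :: real where "lam = 1 + sqrt 2"
definition mu :: real where "mu = sqrt 2 - 1"

lemma lam_pos: "lam > 0" unfolding lam_def by (simp add: add_pos_nonneg)
lemma lam_gt1: "lam > 1" unfolding lam_def by simp
lemma mu_pos: "mu > 0" unfolding mu_def by simp
lemma mu_lt1: "mu < 1" unfolding mu_def
  by (smt (verit) real_sqrt_less_iff real_sqrt_four)
lemma lam_mu: "lam * mu = 1" unfolding lam_def mu_def by (simp add: algebra_simps)
lemma mu_lam: "mu * lam = 1" using lam_mu by (simp add: mult.commute)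
lemma lam_sq: "lam * lam = 3 + 2 * sqrt 2" unfolding lam_def by (simp add: algebra_simps)
lemma sqrt2_bd: "sqrt 2 < 3/2"
proof -
  have "sqrt 2 < sqrt (9/4)" by simp
  also have "sqrt (9/4) = 3/2" by (simp add: real_sqrt_divide)
  finally show ?thesis .
qed

lemma UU_T: "UU (fst p + 2 * snd p, fst p + snd p) = lam * UU p"
  unfolding UU_def lam_def by (simp add: algebra_simps)
lemma VV_T: "VV (fst p + 2 * snd p, fst p + snd p) = - (mu * VV p)"
  unfolding VV_def mu_def by (simp add: algebra_simps)
lemma UU_Ti: "UU (- fst p + 2 * snd p, fst p - snd p) = mu * UU p"
  unfolding UU_def mu_def by (simp add: algebra_simps)
lemma VV_Ti: "VV (- fst p + 2 * snd p, fst p - snd p) = - (lam * VV p)"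
  unfolding VV_def lam_def by (simp add: algebra_simps)

lemma mono2:
  assumes "(c::real) > 0" "a \<le> t" "t \<le> b"
  shows "c * a \<le> c * t \<and> c * t \<le> c * b"
  using assms by simp

lemma L_up:
  assumes "two1 (lam * x0) (lam * d) (- (mu * (y0 + D))) (mu * D)"
  shows "two1 x0 d y0 D"
proof -
  obtain p q where pq: "p \<noteq> q" "sol1 (lam * x0) (lam * d) (- (mu * (y0 + D))) (mu * D) p"
     "sol1 (lam * x0) (lam * d) (- (mu * (y0 + D))) (mu * D) q"
    using assms unfolding two1_def by blast
  define T where "T = (\<lambda>p::int\<times>int. (- fst p + 2 * snd p, fst p - snd p))"
  have solT: "sol1 x0 d y0 D (T p)" if h: "sol1 (lam * x0) (lam * d) (- (mu * (y0 + D))) (mu * D) p" for p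
  proof -
    have m: "mu * lam = 1" "lam * mu = 1" using mu_lam lam_mu by auto
    have u1: "mu * (lam * x0) \<le> mu * UU p \<and> mu * UU p \<le> mu * (lam * x0 + lam * d)"
      by (rule mono2[OF mu_pos]) (use h in \<open>simp_all add: sol1_def\<close>)
    have v1: "lam * (- (mu * (y0 + D))) \<le> lam * VV p \<and> lam * VV p \<le> lam * (- (mu * (y0 + D)) + mu * D)"
      by (rule mono2[OF lam_pos]) (use h in \<open>simp_all add: sol1_def\<close>)
    have a1: "mu * (lam * x0) = x0" "mu * (lam * x0 + lam * d) = x0 + d"
      using m by (simp_all add: distrib_left mult.assoc[symmetric])
    have a2: "lam * (- (mu * (y0 + D))) = - (y0 + D)" "lam * (- (mu * (y0 + D)) + mu * D) = - y0"
      using m by (simp_all add: algebra_simps mult.assoc[symmetric])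
    show ?thesis unfolding sol1_def T_def UU_Ti VV_Ti using u1 v1 a1 a2 by linarith
  qed
  have "T p \<noteq> T q" using pq(1) unfolding T_def by (auto simp: prod_eq_iff)
  then show ?thesis unfolding two1_def using solT pq by blast
qed

lemma L_down:
  assumes "two1 (mu * x0) (mu * d) (- (lam * (y0 + D))) (lam * D)"
  shows "two1 x0 d y0 D"
proof -
  obtain p q where pq: "p \<noteq> q" "sol1 (mu * x0) (mu * d) (- (lam * (y0 + D))) (lam * D) p"
     "sol1 (mu * x0) (mu * d) (- (lam * (y0 + D))) (lam * D) q"
    using assms unfolding two1_def by blast
  define T where "T = (\<lambda>p::int\<times>int. (fst p + 2 * snd p, fst p + snd p))"
  have solT: "sol1 x0 d y0 D (T p)" if h: "sol1 (mu * x0) (mu * d) (- (lam * (y0 + D))) (lam * D) p" for p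
  proof -
    have m: "mu * lam = 1" "lam * mu = 1" using mu_lam lam_mu by auto
    have u1: "lam * (mu * x0) \<le> lam * UU p \<and> lam * UU p \<le> lam * (mu * x0 + mu * d)"
      by (rule mono2[OF lam_pos]) (use h in \<open>simp_all add: sol1_def\<close>)
    have v1: "mu * (- (lam * (y0 + D))) \<le> mu * VV p \<and> mu * VV p \<le> mu * (- (lam * (y0 + D)) + lam * D)"
      by (rule mono2[OF mu_pos]) (use h in \<open>simp_all add: sol1_def\<close>)
    have a1: "lam * (mu * x0) = x0" "lam * (mu * x0 + mu * d) = x0 + d"
      using m by (simp_all add: distrib_left mult.assoc[symmetric])
    have a2: "mu * (- (lam * (y0 + D))) = - (y0 + D)" "mu * (- (lam * (y0 + D)) + lam * D) = - y0"
      using m by (simp_all add: algebra_simps mult.assoc[symmetric])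
    show ?thesis unfolding sol1_def T_def UU_T VV_T using u1 v1 a1 a2 by linarith
  qed
  have "T p \<noteq> T q" using pq(1) unfolding T_def by (auto simp: prod_eq_iff)
  then show ?thesis unfolding two1_def using solT pq by blast
qed

lemma L_swap:
  assumes "two1 y0 D x0 d"
  shows "two1 x0 d y0 D"
proof -
  obtain p q where pq: "p \<noteq> q" "sol1 y0 D x0 d p" "sol1 y0 D x0 d q"
    using assms unfolding two1_def by blast
  define T where "T = (\<lambda>p::int\<times>int. (fst p, - snd p))"
  have solT: "sol1 x0 d y0 D (T p)" if "sol1 y0 D x0 d p" for p
    using that unfolding sol1_def T_def UU_def VV_def by auto
  have "T p \<noteq> T q" using pq(1) unfolding T_def by (auto simp: prod_eq_iff)
  then show ?thesis unfolding two1_def using solT pq by blast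
qed

definition Qd :: "real \<Rightarrow> bool" where
  "Qd d \<longleftrightarrow> (\<forall>x0 y0 D. D > 0 \<longrightarrow> 2 * (lam * lam) \<le> d * D \<longrightarrow> two1 x0 d y0 D)"

lemma Qup: assumes "Qd (lam * d)" shows "Qd d"
  unfolding Qd_def
proof (intro allI impI)
  fix x0 y0 D :: real assume D: "D > 0" "2 * (lam * lam) \<le> d * D"
  have "(lam * d) * (mu * D) = d * D" using lam_mu by (simp add: algebra_simps)
  moreover have "mu * D > 0" using D mu_pos by simp
  ultimately have "two1 (lam * x0) (lam * d) (- (mu * (y0 + D))) (mu * D)"
    using assms D unfolding Qd_def by metis
  then show "two1 x0 d y0 D" by (rule L_up)
qed

lemma Qdown: assumes "Qd (mu * d)" shows "Qd d"
  unfolding Qd_def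
proof (intro allI impI)
  fix x0 y0 D :: real assume D: "D > 0" "2 * (lam * lam) \<le> d * D"
  have "(mu * d) * (lam * D) = d * D" using lam_mu by (simp add: algebra_simps)
  moreover have "lam * D > 0" using D lam_pos by simp
  ultimately have "two1 (mu * x0) (mu * d) (- (lam * (y0 + D))) (lam * D)"
    using assms D unfolding Qd_def by metis
  then show "two1 x0 d y0 D" by (rule L_down)
qed

lemma Qbase: assumes "1 \<le> d" "d < lam" shows "Qd d"
  unfolding Qd_def
proof (intro allI impI)
  fix x0 y0 D :: real assume D: "D > 0" "2 * (lam * lam) \<le> d * D"
  have l2: "lam * lam = 3 + 2 * sqrt 2" by (rule lam_sq)
  have s2: "sqrt 2 < 3/2" by (rule sqrt2_bd)
  have s0: "sqrt 2 > 0" by simp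
  consider "d \<le> 3/2" | "2 \<le> d" | "3/2 < d \<and> d < 2" by linarith
  then show "two1 x0 d y0 D"
  proof cases
    case 1
    have "d * D \<le> (3/2) * D" using 1 D(1) by (simp add: mult_right_mono)
    then have "D \<ge> 1 + 4 * sqrt 2" using D(2) l2 s2 by linarith
    then show ?thesis using assms(1) by (rule baseB1[rotated])
  next
    case 2
    have "d * D < lam * D" using assms(2) D(1) by (simp add: mult_strict_right_mono)
    then have "lam * (2 * lam) < lam * D" using D(2) by (simp add: algebra_simps)
    then have "2 * lam < D" using lam_pos by simp
    then have "D \<ge> 2 + 2 * sqrt 2" unfolding lam_def by simp
    then show ?thesis using 2 by (rule baseB2[rotated])
  next
    case 3
    have "d * D < 2 * D" using 3 D(1) by (simp add: mult_strict_right_mono)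
    then have Dl: "lam * lam \<le> D" using D(2) by linarith
    have "mu * (mu * (lam * lam)) \<le> mu * (mu * D)"
      using Dl mu_pos by (simp add: mult_left_mono)
    moreover have "mu * (mu * (lam * lam)) = 1" using mu_lam
      by (metis mult.assoc mult.left_commute mult_1_right)
    ultimately have A1: "1 \<le> mu * (mu * D)" by simp
    have "sqrt 2 * (3/2) \<le> sqrt 2 * d" using 3 s0 by (simp add: mult_left_mono)
    moreover have "lam * (lam * d) = (lam * lam) * d" by (simp add: mult.assoc)
    moreover have "(lam * lam) * d = 3 * d + 2 * (sqrt 2 * d)" using l2 by (simp add: distrib_right)
    ultimately have A2: "1 + 4 * sqrt 2 \<le> lam * (lam * d)"
      using s2 3 by linarith
    show ?thesis
      apply (rule L_up) apply (rule L_up) apply (rule L_swap) apply (rule baseB1)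
      apply (rule A1) apply (rule A2) done
  qed
qed

lemma Qn: "mu ^ n \<le> d \<Longrightarrow> d < lam ^ Suc n \<Longrightarrow> Qd d"
proof (induction n arbitrary: d)
  case 0
  then show ?case using Qbase by simp
next
  case (Suc n)
  have mun: "mu ^ n \<le> 1" using mu_pos mu_lt1 by (simp add: power_le_one)
  have lamn: "1 \<le> lam ^ n" using lam_gt1 by (simp add: one_le_power)
  consider "d < mu ^ n" | "lam ^ Suc n \<le> d" | "mu ^ n \<le> d \<and> d < lam ^ Suc n" by linarith
  then show ?case
  proof cases
    case 1
    have "lam * mu ^ Suc n \<le> lam * d" using Suc.prems(1) lam_pos by simp
    moreover have "lam * mu ^ Suc n = mu ^ n" by (metis lam_mu mult.assoc mult_1 power_Suc)
    moreover have "lam * d < lam * mu ^ n" using 1 lam_pos by simp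
    moreover have "lam * mu ^ n \<le> lam ^ Suc n" using mun lamn lam_pos
      by (simp add: mult_left_mono order_trans[OF mult_left_mono[OF mun] ])
    ultimately have "Qd (lam * d)" by (intro Suc.IH) linarith+
    then show ?thesis by (rule Qup)
  next
    case 2
    have "mu * lam ^ Suc n \<le> mu * d" using 2 mu_pos by simp
    moreover have "mu * lam ^ Suc n = lam ^ n" by (metis mu_lam mult.assoc mult_1 power_Suc)
    moreover have "mu * d < mu * lam ^ Suc (Suc n)" using Suc.prems(2) mu_pos by simp
    moreover have "mu * lam ^ Suc (Suc n) = lam ^ Suc n" by (metis mu_lam mult.assoc mult_1 power_Suc)
    moreover have "mu ^ n \<le> lam ^ n" using mun lamn by simp
    ultimately have "Qd (mu * d)" by (intro Suc.IH) linarith+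
    then show ?thesis by (rule Qdown)
  next
    case 3
    then show ?thesis using Suc.IH by blast
  qed
qed

lemma Qall: assumes "d > 0" shows "Qd d"
proof -
  obtain n1 where n1: "1 / d < lam ^ n1" using real_arch_pow[OF lam_gt1] by blast
  obtain n2 where n2: "d < lam ^ n2" using real_arch_pow[OF lam_gt1] by blast
  have "1 < d * lam ^ n1" using n1 assms by (simp add: field_simps)
  then have "mu ^ n1 * 1 < mu ^ n1 * (d * lam ^ n1)" using mu_pos by simp
  also have "\<dots> = d * (mu * lam) ^ n1" by (simp add: power_mult_distrib algebra_simps)
  finally have a: "mu ^ n1 < d" using mu_lam by simp
  have "mu ^ (n1 + n2) \<le> mu ^ n1" using mu_pos mu_lt1 by (simp add: power_decreasing)
  moreover have "lam ^ n2 \<le> lam ^ Suc (n1 + n2)" by (intro power_increasing) (use lam_gt1 in auto)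
  ultimately show ?thesis using Qn[of "n1+n2" d] a n2 by simp
qed



lemma omega_eq: "omega = Complex (sqrt 2 / 2) (sqrt 2 / 2)"
  unfolding omega_def by (simp add: complex_eq_iff cos_45 sin_45)

lemma omega2: "omega ^ 2 = \<i>"
proof -
  have "sqrt 2 / 2 * (sqrt 2 / 2) = (1/2::real)" by simp
  then show ?thesis unfolding omega_eq power2_eq_square by (simp add: complex_eq_iff)
qed

lemma omega3: "omega ^ 3 = Complex (- sqrt 2 / 2) (sqrt 2 / 2)"
proof -
  have "omega ^ 3 = \<i> * omega" by (metis omega2 power_Suc numeral_3_eq_3 power2_eq_square mult.commute mult.assoc power_Suc0_right)
  then show ?thesis unfolding omega_eq by (simp add: complex_eq_iff)
qed

lemma zomega_eq: "zomega a0 a1 a2 a3 = Complex (of_int a0 + of_int (a1 - a3) * sqrt 2 / 2) (of_int a2 + of_int (a1 + a3) * sqrt 2 / 2)"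
  unfolding zomega_def omega2 omega3 unfolding omega_eq by (simp add: complex_eq_iff field_simps)


lemma zomega_inj:
  assumes "zomega a0 a1 a2 a3 = zomega b0 b1 b2 b3"
  shows "a0 = b0 \<and> a1 = b1 \<and> a2 = b2 \<and> a3 = b3"
proof -
  have re: "of_int a0 + of_int (a1 - a3) * sqrt 2 / 2 = of_int b0 + of_int (b1 - b3) * sqrt 2 / 2"
   and im: "of_int a2 + of_int (a1 + a3) * sqrt 2 / 2 = of_int b2 + of_int (b1 + b3) * sqrt 2 / 2"
    using assms unfolding zomega_eq by simp_all
  have "real_of_int (2 * a0) + real_of_int (a1 - a3) * sqrt 2 = real_of_int (2 * b0) + real_of_int (b1 - b3) * sqrt 2"
    using re by (simp add: field_simps)
  then have r: "2 * a0 = 2 * b0 \<and> a1 - a3 = b1 - b3" by (rule irr2)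
  have "real_of_int (2 * a2) + real_of_int (a1 + a3) * sqrt 2 = real_of_int (2 * b2) + real_of_int (b1 + b3) * sqrt 2"
    using im by (simp add: field_simps)
  then have i: "2 * a2 = 2 * b2 \<and> a1 + a3 = b1 + b3" by (rule irr2)
  show ?thesis using r i by auto
qed

lemma bullet_zomega: "zomega_bullet (zomega a0 a1 a2 a3) = zomega a0 (- a1) a2 (- a3)"
  unfolding zomega_bullet_def
proof (rule the_equality)
  show "\<exists>b0 b1 b2 b3. zomega a0 a1 a2 a3 = zomega b0 b1 b2 b3 \<and> zomega a0 (- a1) a2 (- a3) = zomega b0 (- b1) b2 (- b3)"
    by blast
next
  fix v assume "\<exists>b0 b1 b2 b3. zomega a0 a1 a2 a3 = zomega b0 b1 b2 b3 \<and> v = zomega b0 (- b1) b2 (- b3)"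
  then obtain b0 b1 b2 b3 where h: "zomega a0 a1 a2 a3 = zomega b0 b1 b2 b3" "v = zomega b0 (- b1) b2 (- b3)" by blast
  then show "v = zomega a0 (- a1) a2 (- a3)" using zomega_inj[OF h(1)] by simp
qed

lemma elem_eq: "Complex (UU (a, b)) (UU (c, d)) = zomega a (b + d) c (d - b)"
  unfolding zomega_eq UU_def by (simp add: field_simps)

lemma elem_bullet: "zomega_bullet (Complex (UU (a, b)) (UU (c, d))) = Complex (VV (a, b)) (VV (c, d))"
  unfolding elem_eq bullet_zomega unfolding zomega_eq VV_def by (simp add: field_simps)

lemma mem_scale:
  assumes "t \<noteq> 0" "cball c \<rho> \<subseteq> S" "dist z (complex_of_real t * c) \<le> \<bar>t\<bar> * \<rho>"
  shows "z \<in> scale_set t S"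
proof -
  have tz: "complex_of_real t \<noteq> 0" using assms(1) by simp
  have "dist (z / complex_of_real t) c = norm ((z - complex_of_real t * c) / complex_of_real t)"
    using tz by (simp add: dist_norm field_simps)
  also have "\<dots> = dist z (complex_of_real t * c) / \<bar>t\<bar>" by (simp add: norm_divide dist_norm)
  also have "\<dots> \<le> \<rho>" using assms(1,3) by (simp add: divide_le_eq mult.commute)
  finally have "z / complex_of_real t \<in> S" using assms(2) by (auto simp: dist_commute)
  moreover have "z = complex_of_real t * (z / complex_of_real t)" using tz by simp
  ultimately show ?thesis unfolding scale_set_def by blast
qed

lemma square_in:
  assumes "\<bar>Re z - Re p\<bar> \<le> sqrt 2 * \<rho> / 2" "\<bar>Im z - Im p\<bar> \<le> sqrt 2 * \<rho> / 2" "\<rho> \<ge> 0"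
  shows "dist z p \<le> \<rho>"
proof -
  have e: "(sqrt 2 * \<rho> / 2)^2 = \<rho>^2 / 2" by (simp add: power_mult_distrib power_divide)
  have a: "(Re z - Re p)^2 \<le> \<rho>^2 / 2"
    using power_mono[OF assms(1) abs_ge_zero, of 2] e by simp
  have b: "(Im z - Im p)^2 \<le> \<rho>^2 / 2"
    using power_mono[OF assms(2) abs_ge_zero, of 2] e by simp
  have "dist z p = sqrt ((Re z - Re p)^2 + (Im z - Im p)^2)"
    by (simp add: dist_norm cmod_def)
  also have "\<dots> \<le> sqrt (\<rho>^2)" using a b by (intro real_sqrt_le_mono) linarith
  also have "\<dots> = \<rho>" using assms(3) by simp
  finally show ?thesis .
qed

theorem lemma5p57:
  fixes A B :: "complex set" and k :: nat and r R :: real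
  assumes "convex A" and "convex B"
    and "r \<ge> 0" and "R \<ge> 0"
    and "\<exists>c. cball c r \<subseteq> A" and "\<exists>c. cball c R \<subseteq> B"
    and "r * R \<ge> (1 + sqrt 2) ^ 2 / 2 ^ k"
  shows "\<exists>u v. u \<noteq> v \<and> scaled_grid_solution A B k u \<and> scaled_grid_solution A B k v"
proof -
  obtain c1 where c1: "cball c1 r \<subseteq> A" using assms(5) by blast
  obtain c2 where c2: "cball c2 R \<subseteq> B" using assms(6) by blast
  have l2: "(1 + sqrt 2) ^ 2 = lam * lam" unfolding lam_def by (simp add: power2_eq_square)
  have lp: "lam * lam > 0" using lam_pos by simp
  have k2: "(2::real) ^ k > 0" by simp
  have P: "lam * lam \<le> 2 ^ k * (r * R)"
    using assms(7) k2 unfolding l2 by (simp add: pos_divide_le_eq mult.commute)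
  have rp: "r > 0" using P lp assms(3) by (cases "r = 0") auto
  have Rp: "R > 0" using P lp assms(4) by (cases "R = 0") auto
  define s where "s = sqrt 2 ^ k"
  have sp: "s > 0" unfolding s_def by simp
  have ss: "s * s = 2 ^ k" unfolding s_def by (simp add: power_mult_distrib[symmetric])
  define t2 where "t2 = (- sqrt 2) ^ k"
  have t2a: "\<bar>t2\<bar> = s" unfolding t2_def s_def by (simp add: power_abs)
  have t2n: "t2 \<noteq> 0" using t2a sp by auto
  define \<rho>1 where "\<rho>1 = s * r"
  define \<rho>2 where "\<rho>2 = s * R"
  define \<sigma>1 where "\<sigma>1 = sqrt 2 * \<rho>1"
  define \<sigma>2 where "\<sigma>2 = sqrt 2 * \<rho>2"
  have \<rho>1p: "\<rho>1 > 0" unfolding \<rho>1_def using sp rp by simp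
  have \<rho>2p: "\<rho>2 > 0" unfolding \<rho>2_def using sp Rp by simp
  have \<sigma>1p: "\<sigma>1 > 0" unfolding \<sigma>1_def using \<rho>1p by simp
  have \<sigma>2p: "\<sigma>2 > 0" unfolding \<sigma>2_def using \<rho>2p by simp
  have "\<sigma>1 * \<sigma>2 = 2 * ((s * s) * (r * R))" unfolding \<sigma>1_def \<sigma>2_def \<rho>1_def \<rho>2_def
    by (simp add: algebra_simps)
  then have prod: "2 * (lam * lam) \<le> \<sigma>1 * \<sigma>2" using P ss by simp
  define p1 where "p1 = complex_of_real s * c1"
  define p2 where "p2 = complex_of_real t2 * c2"
  have Q: "Qd \<sigma>1" by (rule Qall[OF \<sigma>1p])
  have "two1 (Re p1 - \<sigma>1 / 2) \<sigma>1 (Re p2 - \<sigma>2 / 2) \<sigma>2"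
    using Q \<sigma>2p prod unfolding Qd_def by blast
  then obtain p q where pq: "p \<noteq> q" "sol1 (Re p1 - \<sigma>1 / 2) \<sigma>1 (Re p2 - \<sigma>2 / 2) \<sigma>2 p"
    "sol1 (Re p1 - \<sigma>1 / 2) \<sigma>1 (Re p2 - \<sigma>2 / 2) \<sigma>2 q" unfolding two1_def by blast
  have "two1 (Im p1 - \<sigma>1 / 2) \<sigma>1 (Im p2 - \<sigma>2 / 2) \<sigma>2"
    using Q \<sigma>2p prod unfolding Qd_def by blast
  then obtain w where w: "sol1 (Im p1 - \<sigma>1 / 2) \<sigma>1 (Im p2 - \<sigma>2 / 2) \<sigma>2 w" unfolding two1_def by blast
  have good: "scaled_grid_solution A B k (Complex (UU p') (UU w))"
    if h: "sol1 (Re p1 - \<sigma>1 / 2) \<sigma>1 (Re p2 - \<sigma>2 / 2) \<sigma>2 p'" for p'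
  proof -
    obtain a b where ab: "p' = (a, b)" by fastforce
    obtain c d where cd: "w = (c, d)" by fastforce
    have Z: "Complex (UU p') (UU w) \<in> ZOmega" unfolding ab cd elem_eq ZOmega_def by blast
    have e1: "sqrt 2 * \<rho>1 / 2 = \<sigma>1 / 2" by (simp add: \<sigma>1_def)
    have e2: "sqrt 2 * \<rho>2 / 2 = \<sigma>2 / 2" by (simp add: \<sigma>2_def)
    have d1: "dist (Complex (UU p') (UU w)) p1 \<le> \<rho>1"
      apply (rule square_in) using h w \<rho>1p unfolding e1 sol1_def abs_le_iff complex.sel by auto
    have S1: "Complex (UU p') (UU w) \<in> scale_set (sqrt 2 ^ k) A"
      apply (rule mem_scale[OF _ c1]) using sp d1 unfolding s_def[symmetric] p1_def \<rho>1_def by simp_all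
    have d2: "dist (Complex (VV p') (VV w)) p2 \<le> \<rho>2"
      apply (rule square_in) using h w \<rho>2p unfolding e2 sol1_def abs_le_iff complex.sel by auto
    have S2: "Complex (VV p') (VV w) \<in> scale_set ((- sqrt 2) ^ k) B"
      apply (rule mem_scale[OF _ c2]) using t2n t2a d2 unfolding t2_def[symmetric] p2_def \<rho>2_def by simp_all
    have "zomega_bullet (Complex (UU p') (UU w)) = Complex (VV p') (VV w)"
      unfolding ab cd by (rule elem_bullet)
    then show ?thesis unfolding scaled_grid_solution_def using Z S1 S2 by simp
  qed
  have ne: "Complex (UU p) (UU w) \<noteq> Complex (UU q) (UU w)"
  proof
    assume "Complex (UU p) (UU w) = Complex (UU q) (UU w)"
    then have "UU p = UU q" by simp
    then have "fst p = fst q \<and> snd p = snd q" unfolding UU_def by (rule irr2)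
    then show False using pq(1) by (simp add: prod_eq_iff)
  qed
  show ?thesis using ne good pq by blast
qed

end
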